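(* Let $\mu$ be a probability measure on $\mathbb{R}^n$ with a log-concave density $f$ that is $1$-unconditional. Then for every convex set $B\subset\mathbb{R}^n$, every $k\in\{1,\dots,n\}$ and every $\epsilon>0$, $$\mu\big((B+\epsilon I_k)\setminus B\big)\leq 2\epsilon\, g_k(0),$$ where $I_k=[-e_k,e_k]$ and $g_k(t)=\int_{\mathbb{R}^{n-1}}f(y,t)\,dy$ is the $k$-th marginal density (writing $x=(y,t)$ with $t=x_k$ and $y\in\mathbb{R}^{n-1}$ the remaining coordinates).
   Context: A density $f$ on $\mathbb{R}^n$ is $1$-unconditional if $f(x_1,\dots,x_n)=f(\epsilon_1x_1,\dots,\epsilon_nx_n)$ for all $\epsilon_i\in\{-1,1\}$; log-concave means $\ln f$ is concave. $e_k$ is the $k$-th standard basis vector. *)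

theory Defs
  imports "HOL-Analysis.Analysis" "HOL-Probability.Probability"
begin

text \<open>Log-concavity of a nonnegative function (ln f concave, with ln 0 = -infinity).\<close>
definition log_concave :: "('a::real_vector \<Rightarrow> real) \<Rightarrow> bool" where
  "log_concave f \<longleftrightarrow> (\<forall>x. 0 \<le> f x) \<and>
     (\<forall>x y. \<forall>t\<in>{0..1::real}. f x powr (1 - t) * f y powr t \<le> f ((1 - t) *\<^sub>R x + t *\<^sub>R y))"

definition unconditional :: "(real^'n \<Rightarrow> real) \<Rightarrow> bool" where
  "unconditional f \<longleftrightarrow>
     (\<forall>(\<epsilon>::'n \<Rightarrow> real) x. (\<forall>i. \<epsilon> i \<in> {-1, 1}) \<longrightarrow> f (\<chi> i. \<epsilon> i * x $ i) = f x)"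

definition marginal :: "(real^'n \<Rightarrow> real) \<Rightarrow> 'n \<Rightarrow> real \<Rightarrow> ennreal" where
  "marginal f k t = (\<integral>\<^sup>+ y. ennreal (f (\<chi> i. if i = k then t else y i))
                       \<partial>(PiM (UNIV - {k}) (\<lambda>_. lborel)))"

end

theory Submission imports Defs begin

definition emb :: "'n \<Rightarrow> ('n \<Rightarrow> real) \<times> real \<Rightarrow> real^'n::finite" where
  "emb k z = (\<chi> i. if i = k then snd z else fst z i)"

lemma prod_Basis_cart: "(\<Prod>b\<in>Basis. (u::real^'n) \<bullet> b) = (\<Prod>i\<in>UNIV. u $ i)"
  by (simp add: Basis_vec_def cart_eq_inner_axis axis_eq_axis prod.UNION_disjoint)

lemma emb_meas: "emb k \<in> (PiM (UNIV - {k}) (\<lambda>_. lborel) \<Otimes>\<^sub>M lborel) \<rightarrow>\<^sub>M borel"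
proof -
  have "(\<lambda>z. emb k z \<bullet> b) \<in> borel_measurable (PiM (UNIV - {k}) (\<lambda>_. lborel) \<Otimes>\<^sub>M lborel)"
    if "b \<in> Basis" for b
  proof -
    obtain i where b: "b = axis i 1" using \<open>b \<in> Basis\<close> by (auto simp: Basis_vec_def)
    have e: "(\<lambda>z. emb k z \<bullet> b) = (\<lambda>z. if i = k then snd z else fst z i)"
      by (rule ext) (simp only: b emb_def inner_axis vec_lambda_beta real_inner_1_right)
    show ?thesis unfolding e
      by (cases "i = k") (simp_all add: measurable_component_singleton)
  qed
  then show ?thesis by (subst borel_measurable_euclidean_space) auto
qed

lemma key: "(lborel :: (real^'n::finite) measure) = distr (PiM (UNIV - {k}) (\<lambda>_. lborel) \<Otimes>\<^sub>M lborel) borel (emb k)"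
proof (rule lborel_eqI)
  interpret P: finite_product_sigma_finite "\<lambda>_. lborel :: real measure" "UNIV - {k}" by standard auto
  interpret PP: pair_sigma_finite "PiM (UNIV - {k}) (\<lambda>_. lborel :: real measure)" "lborel :: real measure" by standard
  fix l u :: "real^'n"
  assume lu: "\<And>b. b \<in> Basis \<Longrightarrow> l \<bullet> b \<le> u \<bullet> b"
  have lu': "l $ i \<le> u $ i" for i
  proof -
    have "axis i (1::real) \<in> Basis" by simp
    from lu[OF this] show ?thesis by (simp only: inner_axis real_inner_1_right)
  qed
  have pre: "emb k -` box l u \<inter> space (PiM (UNIV - {k}) (\<lambda>_. lborel) \<Otimes>\<^sub>M lborel)
     = (PiE (UNIV - {k}) (\<lambda>i. {l$i<..<u$i})) \<times> {l$k<..<u$k}"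
  proof (intro set_eqI iffI)
    fix z assume z: "z \<in> emb k -` box l u \<inter> space (PiM (UNIV - {k}) (\<lambda>_. lborel) \<Otimes>\<^sub>M lborel)"
    obtain y t where zt: "z = (y, t)" by (cases z)
    from z have bx: "\<forall>i. l $ i < emb k (y, t) $ i \<and> emb k (y, t) $ i < u $ i"
      by (simp add: zt mem_box_cart)
    from z have sp: "y \<in> PiE (UNIV - {k}) (\<lambda>_. UNIV)"
      by (simp add: zt space_pair_measure space_PiM)
    have "y \<in> PiE (UNIV - {k}) (\<lambda>i. {l$i<..<u$i})"
    proof (rule PiE_I)
      fix i assume "i \<in> UNIV - {k}"
      then show "y i \<in> {l$i<..<u$i}" using bx[rule_format, of i] by (simp add: emb_def)
    next
      fix i assume "i \<notin> UNIV - {k}"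
      then show "y i = undefined" using sp by (auto simp: PiE_def extensional_def)
    qed
    moreover have "t \<in> {l$k<..<u$k}" using bx[rule_format, of k] by (simp add: emb_def)
    ultimately show "z \<in> (PiE (UNIV - {k}) (\<lambda>i. {l$i<..<u$i})) \<times> {l$k<..<u$k}" by (simp add: zt)
  next
    fix z assume z: "z \<in> (PiE (UNIV - {k}) (\<lambda>i. {l$i<..<u$i})) \<times> {l$k<..<u$k}"
    obtain y t where zt: "z = (y, t)" by (cases z)
    from z have y: "y \<in> PiE (UNIV - {k}) (\<lambda>i. {l$i<..<u$i})" and t: "t \<in> {l$k<..<u$k}" by (simp_all add: zt)
    have "emb k (y, t) \<in> box l u"
      unfolding mem_box_cart
    proof
      fix i
      show "l $ i < emb k (y, t) $ i \<and> emb k (y, t) $ i < u $ i"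
      proof (cases "i = k")
        case True then show ?thesis using t by (simp add: emb_def)
      next
        case False then have "y i \<in> {l$i<..<u$i}" using y by (auto simp: PiE_def Pi_def)
        then show ?thesis using False by (simp add: emb_def)
      qed
    qed
    moreover have "y \<in> space (PiM (UNIV - {k}) (\<lambda>_. lborel :: real measure))"
      using y by (auto simp: space_PiM PiE_def Pi_def)
    ultimately show "z \<in> emb k -` box l u \<inter> space (PiM (UNIV - {k}) (\<lambda>_. lborel) \<Otimes>\<^sub>M lborel)"
      by (simp add: zt space_pair_measure)
  qed
  have "emeasure (distr (PiM (UNIV - {k}) (\<lambda>_. lborel) \<Otimes>\<^sub>M lborel) borel (emb k)) (box l u)
     = emeasure (PiM (UNIV - {k}) (\<lambda>_. lborel) \<Otimes>\<^sub>M lborel) ((PiE (UNIV - {k}) (\<lambda>i. {l$i<..<u$i})) \<times> {l$k<..<u$k})"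
    proof -
    have bs: "box l u \<in> sets borel" by simp
    show ?thesis using emeasure_distr[OF emb_meas[of k] bs] by (simp only: pre)
  qed
  also have "\<dots> = emeasure (PiM (UNIV - {k}) (\<lambda>_. lborel)) (PiE (UNIV - {k}) (\<lambda>i. {l$i<..<u$i})) * emeasure lborel {l$k<..<u$k}"
    by (rule sigma_finite_measure.emeasure_pair_measure_Times[OF sigma_finite_lborel]) (auto intro!: sets_PiM_I_finite)
  also have "\<dots> = (\<Prod>i\<in>UNIV - {k}. ennreal (u$i - l$i)) * ennreal (u$k - l$k)"
    using lu' by (simp add: P.measure_times)
  also have "\<dots> = ennreal (u$k - l$k) * (\<Prod>i\<in>UNIV - {k}. ennreal (u$i - l$i))"
    by (rule mult.commute)
  also have "(\<Prod>i\<in>UNIV - {k}. ennreal (u$i - l$i)) = ennreal (\<Prod>i\<in>UNIV - {k}. u$i - l$i)"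
    by (rule prod_ennreal) (use lu' in simp)
  also have "ennreal (u$k - l$k) * ennreal (\<Prod>i\<in>UNIV - {k}. u$i - l$i) = ennreal ((u$k - l$k) * (\<Prod>i\<in>UNIV - {k}. u$i - l$i))"
    by (rule ennreal_mult[symmetric]) (use lu' in \<open>simp_all add: prod_nonneg\<close>)
  also have "(u$k - l$k) * (\<Prod>i\<in>UNIV - {k}. u$i - l$i) = (\<Prod>i\<in>UNIV. u$i - l$i)"
  proof -
    have "(\<Prod>i\<in>UNIV. u$i - l$i) = (\<Prod>i\<in>insert k (UNIV - {k}). u$i - l$i)" by (simp add: insert_absorb)
    also have "\<dots> = (u$k - l$k) * (\<Prod>i\<in>UNIV - {k}. u$i - l$i)" by (subst prod.insert) auto
    finally show ?thesis by (rule sym)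
  qed
  also have "(\<Prod>i\<in>UNIV. u$i - l$i) = (\<Prod>b\<in>Basis. (u - l) \<bullet> b)"
    by (simp only: prod_Basis_cart vector_minus_component)
  finally show "emeasure (distr (PiM (UNIV - {k}) (\<lambda>_. lborel) \<Otimes>\<^sub>M lborel) borel (emb k)) (box l u) = (\<Prod>b\<in>Basis. (u - l) \<bullet> b)" .
qed simp

lemma f_le_zero:
  fixes f :: "real^'n::finite \<Rightarrow> real"
  assumes lc: "log_concave f" and unc: "unconditional f"
  shows "f x \<le> f (\<chi> i. if i = k then 0 else x $ i)"
proof -
  let ?x' = "(\<chi> i. (if i = k then -1 else 1) * x $ i) :: real^'n"
  have "f ?x' = f x" using unc unfolding unconditional_def
    by (erule_tac x="\<lambda>i. if i = k then -1 else 1" in allE) auto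
  moreover have "f x powr (1 - 1/2) * f ?x' powr (1/2) \<le> f ((1 - 1/2) *\<^sub>R x + (1/2) *\<^sub>R ?x')"
  proof -
    have H: "\<forall>x y. \<forall>t\<in>{0..1::real}. f x powr (1 - t) * f y powr t \<le> f ((1 - t) *\<^sub>R x + t *\<^sub>R y)"
      using lc by (simp add: log_concave_def)
    show ?thesis by (rule H[rule_format]) simp
  qed
  moreover have "(1 - 1/2) *\<^sub>R x + (1/2) *\<^sub>R ?x' = (\<chi> i. if i = k then 0 else x $ i)"
    by (simp add: vec_eq_iff)
  moreover have "f x powr (1 - 1/2) * f x powr (1/2) = f x"
  proof -
    have "f x powr (1 - 1/2) * f x powr (1/2) = f x powr 1" by (simp add: powr_add[symmetric])
    also have "\<dots> = f x" using lc unfolding log_concave_def by simp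
    finally show ?thesis .
  qed
  ultimately show ?thesis by simp
qed

lemma interval_fringe:
  fixes C :: "real set"
  assumes cv: "convex C"
  shows "\<exists>a b. {t. \<exists>u\<in>C. \<bar>t - u\<bar> \<le> e} - C \<subseteq> {a..a+e} \<union> {b..b+e}"
proof (intro exI subsetI)
  fix t assume "t \<in> {t. \<exists>u\<in>C. \<bar>t - u\<bar> \<le> e} - C"
  then obtain u where u: "u \<in> C" "\<bar>t - u\<bar> \<le> e" and tC: "t \<notin> C" by auto
  have iv: "False" if "v1 \<in> C" "v2 \<in> C" "v1 \<le> t" "t \<le> v2" for v1 v2
    using cv tC that by (metis is_interval_1 is_interval_convex_1)
  show "t \<in> {Inf C - e..Inf C - e + e} \<union> {Sup C..Sup C + e}"
  proof (cases "\<forall>v\<in>C. t < v")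
    case True
    then have bb: "bdd_below C" unfolding bdd_below_def using less_imp_le by blast
    have "t \<le> Inf C" using True u(1) by (intro cInf_greatest) (auto intro: less_imp_le)
    moreover have "Inf C \<le> u" using bb u(1) by (rule cInf_lower[rotated])
    ultimately show ?thesis using u(2) by auto
  next
    case False
    then obtain v where v: "v \<in> C" "v \<le> t" by (auto simp: not_less)
    have all: "\<forall>w\<in>C. w \<le> t" using iv[OF v(1) _ v(2)] by (meson linear)
    then have ba: "bdd_above C" by (auto intro: bdd_aboveI)
    have "Sup C \<le> t" using all u(1) by (intro cSup_least) auto
    moreover have "u \<le> Sup C" using ba u(1) by (rule cSup_upper[rotated])
    ultimately show ?thesis using u(2) by auto
  qed
qed

lemma section_fringe:
  fixes B :: "(real^'n::finite) set"
  assumes cvx: "convex B"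
  shows "\<exists>a b. {t. emb k (y, t) \<in> {b + s *\<^sub>R axis k 1 | b s. b \<in> B \<and> s \<in> {-e..e}} - B}
           \<subseteq> {a..a+e} \<union> {b..b+e}"
proof -
  define C where "C = {u. emb k (y, u) \<in> B}"
  have cC: "convex C" unfolding convex_def C_def
  proof (intro allI impI ballI, clarsimp)
    fix a b u v :: real assume *: "emb k (y, a) \<in> B" "emb k (y, b) \<in> B" "0 \<le> u" "0 \<le> v" "u + v = 1"
    have "emb k (y, u * a + v * b) = u *\<^sub>R emb k (y, a) + v *\<^sub>R emb k (y, b)"
      using *(5) by (auto simp: vec_eq_iff emb_def algebra_simps simp flip: distrib_right)
    then show "emb k (y, u * a + v * b) \<in> B" using * cvx unfolding convex_def by simp
  qed
  have sub: "{t. emb k (y, t) \<in> {b + s *\<^sub>R axis k 1 | b s. b \<in> B \<and> s \<in> {-e..e}} - B}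
        \<subseteq> {t. \<exists>u\<in>C. \<bar>t - u\<bar> \<le> e} - C"
  proof (clarsimp simp: C_def)
    fix t b s assume *: "emb k (y, t) = b + s *\<^sub>R axis k 1" "b \<in> B" "- e \<le> s" "s \<le> e"
    have "b = emb k (y, t - s)" using *(1) by (auto simp: vec_eq_iff emb_def axis_def split: if_splits)
    then show "\<exists>u. emb k (y, u) \<in> B \<and> \<bar>t - u\<bar> \<le> e" using * by (intro exI[of _ "t - s"]) auto
  qed
  obtain a b where ab: "{t. \<exists>u\<in>C. \<bar>t - u\<bar> \<le> e} - C \<subseteq> {a..a+e} \<union> {b..b+e}"
    using interval_fringe[OF cC, of e] by (elim exE) (rule that)
  show ?thesis by (rule exI[of _ a], rule exI[of _ b], rule subset_trans[OF sub ab])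
qed



lemma marg_emb: "marginal f k 0 = (\<integral>\<^sup>+y. ennreal (f (emb k (y, 0))) \<partial>PiM (UNIV - {k}) (\<lambda>_. lborel))"
  unfolding marginal_def emb_def fst_conv snd_conv ..

theorem lemma5p6:
  fixes f :: "real^'n \<Rightarrow> real" and B :: "(real^'n) set" and k :: 'n and \<epsilon> :: real
  assumes meas: "f \<in> borel_measurable lebesgue"
    and lc: "log_concave f"
    and unc: "unconditional f"
    and prob: "(\<integral>\<^sup>+ x. ennreal (f x) \<partial>lebesgue) = 1"
    and cvx: "convex B"
    and eps: "\<epsilon> > 0"
  shows "emeasure (density lebesgue f)
           ({b + s *\<^sub>R axis k 1 | b s. b \<in> B \<and> s \<in> {-\<epsilon>..\<epsilon>}} - B)
         \<le> ennreal (2 * \<epsilon>) * marginal f k 0"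
proof -
  let ?S = "{b + s *\<^sub>R axis k 1 | b s. b \<in> B \<and> s \<in> {-\<epsilon>..\<epsilon>}} - B"
  show ?thesis
  proof (cases "?S \<in> sets lebesgue")
    case False
    then show ?thesis by (simp add: emeasure_notin_sets)
  next
    case True
    define P where "P = PiM (UNIV - {k}) (\<lambda>_. lborel :: real measure)"
    interpret Pf: finite_product_sigma_finite "\<lambda>_. lborel :: real measure" "UNIV - {k}"
      by standard auto
    interpret PP: pair_sigma_finite P "lborel :: real measure" unfolding P_def by standard
    have lbf: "sigma_finite_measure (lborel :: real measure)" by (rule sigma_finite_lborel)
    define F where "F x = ennreal (f x) * indicator ?S x" for x
    have Fm: "F \<in> borel_measurable lebesgue"
      unfolding F_def using meas True by measurable
    obtain G where Gm: "G \<in> borel_measurable lborel" and GAE: "AE x in lborel. F x = G x"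
      using completion_ex_borel_measurable[OF Fm] by auto
    have Gb: "G \<in> borel_measurable borel" using Gm by simp
    have em: "emb k \<in> (P \<Otimes>\<^sub>M lborel) \<rightarrow>\<^sub>M borel" unfolding P_def by (rule emb_meas)
    have GEm: "(\<lambda>z. G (emb k z)) \<in> borel_measurable (P \<Otimes>\<^sub>M lborel)"
      by (rule measurable_compose[OF em Gb])
    have keyP: "(lborel :: (real^'n) measure) = distr (P \<Otimes>\<^sub>M lborel) borel (emb k)"
      unfolding P_def by (rule key)
    have "emeasure (density lebesgue f) ?S = (\<integral>\<^sup>+x. F x \<partial>lebesgue)"
      unfolding F_def using meas True by (subst emeasure_density) auto
    also have "\<dots> = (\<integral>\<^sup>+x. G x \<partial>lebesgue)"
      by (rule nn_integral_cong_AE) (rule AE_completion[OF GAE])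
    also have "\<dots> = (\<integral>\<^sup>+x. G x \<partial>lborel)" by (rule nn_integral_completion)
    also have "\<dots> = (\<integral>\<^sup>+z. G (emb k z) \<partial>(P \<Otimes>\<^sub>M lborel))"
      by (subst keyP) (simp add: nn_integral_distr em Gb)
    also have "\<dots> = (\<integral>\<^sup>+y. (\<integral>\<^sup>+t. G (emb k (y, t)) \<partial>lborel) \<partial>P)"
      by (rule sigma_finite_measure.nn_integral_fst[OF lbf, symmetric]) (use GEm in simp)
    finally have eq1: "emeasure (density lebesgue f) ?S = (\<integral>\<^sup>+y. (\<integral>\<^sup>+t. G (emb k (y, t)) \<partial>lborel) \<partial>P)" .
    have "AE x in distr (P \<Otimes>\<^sub>M lborel) borel (emb k). F x = G x" using GAE keyP by metis
    then have "AE z in P \<Otimes>\<^sub>M lborel. F (emb k z) = G (emb k z)" by (rule AE_distrD[OF em])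
    then have AE2: "AE y in P. AE t in lborel. F (emb k (y, t)) = G (emb k (y, t))"
      by (rule PP.AE_pair)
    define \<phi> where "\<phi> y = (\<integral>\<^sup>+t. G (emb k (y, t)) \<partial>lborel)" for y
    have \<phi>m: "\<phi> \<in> borel_measurable P"
      unfolding \<phi>_def by (rule sigma_finite_measure.borel_measurable_nn_integral_fst[OF lbf GEm])
    have bound: "AE y in P. \<phi> y \<le> ennreal (2 * \<epsilon>) * ennreal (f (emb k (y, 0)))"
      using AE2
    proof eventually_elim
      case (elim y)
      have phiy: "\<phi> y = (\<integral>\<^sup>+t. F (emb k (y, t)) \<partial>lborel)"
        unfolding \<phi>_def by (rule nn_integral_cong_AE) (use elim in auto)
      obtain a b where ab: "{t. emb k (y, t) \<in> ?S} \<subseteq> {a..a+\<epsilon>} \<union> {b..b+\<epsilon>}"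
        using section_fringe[OF cvx, of k y \<epsilon>] by blast
      have "(\<integral>\<^sup>+t. F (emb k (y, t)) \<partial>lborel)
          \<le> (\<integral>\<^sup>+t. ennreal (f (emb k (y, 0))) * indicator ({a..a+\<epsilon>} \<union> {b..b+\<epsilon>}) t \<partial>lborel)"
      proof (rule nn_integral_mono)
        fix t
        have ez: "emb k (y, 0) = (\<chi> i. if i = k then 0 else emb k (y, t) $ i)"
          by (simp add: emb_def vec_eq_iff)
        have fle: "f (emb k (y, t)) \<le> f (emb k (y, 0))"
          unfolding ez by (rule f_le_zero[OF lc unc])
        show "F (emb k (y, t)) \<le> ennreal (f (emb k (y, 0))) * indicator ({a..a+\<epsilon>} \<union> {b..b+\<epsilon>}) t"
        proof (cases "emb k (y, t) \<in> ?S")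
          case True
          then have "t \<in> {a..a+\<epsilon>} \<union> {b..b+\<epsilon>}" using ab by blast
          note tin = this
          have "F (emb k (y, t)) = ennreal (f (emb k (y, t)))"
            unfolding F_def indicator_def using True by (simp only: if_P mult_1_right of_bool_def)
          moreover have "indicator ({a..a+\<epsilon>} \<union> {b..b+\<epsilon>}) t = (1::ennreal)"
            using tin by (simp only: indicator_def of_bool_def if_P)
          ultimately show ?thesis using fle by (simp only: mult_1_right ennreal_leI)
        next
          case False
          have "F (emb k (y, t)) = 0"
            unfolding F_def indicator_def using False by (simp only: if_False mult_zero_right of_bool_def)
          then show ?thesis by (simp only: zero_le)
        qed
      qed
      also have "\<dots> = ennreal (f (emb k (y, 0))) * emeasure lborel ({a..a+\<epsilon>} \<union> {b..b+\<epsilon>})"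
        by (rule nn_integral_cmult_indicator) simp
      also have "\<dots> \<le> ennreal (f (emb k (y, 0))) * ennreal (2 * \<epsilon>)"
      proof (rule mult_left_mono)
        have "emeasure lborel ({a..a+\<epsilon>} \<union> {b..b+\<epsilon>}) \<le> emeasure lborel {a..a+\<epsilon>} + emeasure lborel {b..b+\<epsilon>}"
          by (rule emeasure_subadditive) auto
        also have "\<dots> = ennreal (2 * \<epsilon>)" using eps by (simp add: ennreal_plus[symmetric] del: ennreal_plus)
        finally show "emeasure lborel ({a..a+\<epsilon>} \<union> {b..b+\<epsilon>}) \<le> ennreal (2 * \<epsilon>)" .
      qed simp
      finally have le: "(\<integral>\<^sup>+t. F (emb k (y, t)) \<partial>lborel) \<le> ennreal (f (emb k (y, 0))) * ennreal (2 * \<epsilon>)" .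
      show ?case unfolding phiy using le by (simp only: mult.commute)
    qed
    have marg: "marginal f k 0 = (\<integral>\<^sup>+y. ennreal (f (emb k (y, 0))) \<partial>P)"
      unfolding P_def by (rule marg_emb)
    define \<psi> where "\<psi> y = ennreal (1 / (2 * \<epsilon>)) * \<phi> y" for y
    have \<psi>m: "\<psi> \<in> borel_measurable P" unfolding \<psi>_def using \<phi>m by measurable
    have c1: "ennreal (2 * \<epsilon>) * ennreal (1 / (2 * \<epsilon>)) = 1"
    proof -
      have "ennreal (2 * \<epsilon>) * ennreal (1 / (2 * \<epsilon>)) = ennreal ((2 * \<epsilon>) * (1 / (2 * \<epsilon>)))"
        using eps by (intro ennreal_mult[symmetric]) auto
      also have "(2 * \<epsilon>) * (1 / (2 * \<epsilon>)) = 1" using eps by simp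
      finally show ?thesis by simp
    qed
    have c2: "ennreal (1 / (2 * \<epsilon>)) * ennreal (2 * \<epsilon>) = 1" using c1 by (metis mult.commute)
    have "emeasure (density lebesgue f) ?S = (\<integral>\<^sup>+y. \<phi> y \<partial>P)"
      using eq1 unfolding \<phi>_def .
    also have "\<dots> = (\<integral>\<^sup>+y. ennreal (2 * \<epsilon>) * \<psi> y \<partial>P)"
    proof (rule nn_integral_cong)
      fix y
      show "\<phi> y = ennreal (2 * \<epsilon>) * \<psi> y"
        unfolding \<psi>_def by (simp only: mult.assoc[symmetric] c1 mult_1_left)
    qed
    also have "\<dots> = ennreal (2 * \<epsilon>) * (\<integral>\<^sup>+y. \<psi> y \<partial>P)"
      by (rule nn_integral_cmult[OF \<psi>m])
    also have "\<dots> \<le> ennreal (2 * \<epsilon>) * (\<integral>\<^sup>+y. ennreal (f (emb k (y, 0))) \<partial>P)"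
    proof (rule mult_left_mono)
      show "(\<integral>\<^sup>+y. \<psi> y \<partial>P) \<le> (\<integral>\<^sup>+y. ennreal (f (emb k (y, 0))) \<partial>P)"
      proof (rule nn_integral_mono_AE)
        show "AE y in P. \<psi> y \<le> ennreal (f (emb k (y, 0)))"
          using bound
        proof eventually_elim
          case (elim y)
          have "\<psi> y \<le> ennreal (1 / (2 * \<epsilon>)) * (ennreal (2 * \<epsilon>) * ennreal (f (emb k (y, 0))))"
            unfolding \<psi>_def by (rule mult_left_mono[OF elim]) (rule zero_le)
          also have "\<dots> = ennreal (f (emb k (y, 0)))"
            by (simp only: mult.assoc[symmetric] c2 mult_1_left)
          finally show ?case .
        qed
      qed
    qed (rule zero_le)
    also have "\<dots> = ennreal (2 * \<epsilon>) * marginal f k 0" by (simp only: marg)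
    finally show ?thesis .
  qed
qed

end
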